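(* Let $D$ be an oriented graph whose missing graph is a vertex-disjoint union of paths. Then every vertex of the dependency digraph $\Delta(D)$ has out-degree at most 2 and in-degree at most 2.
   Context: All digraphs are finite oriented graphs. $N^+(v)$ is the out-neighborhood; $N^{++}(v)$ is the set of vertices $w\notin N^+(v)\cup\{v\}$ with $u\to w$ for some $u\in N^+(v)$. A missing edge is a pair of distinct non-adjacent vertices; the missing graph is formed by the missing edges. For missing edges $\{x,y\},\{a,b\}$, $\{x,y\}$ loses to $\{a,b\}$ if the endpoints can be labelled so that $x\to a$, $b\notin N^+(x)\cup N^{++}(x)$, $y\to b$, $a\notin N^+(y)\cup N^{++}(y)$. The dependency digraph $\Delta(D)$ has the missing edges as vertices and an arc $(e,e')$ whenever $e$ loses to $e'$. *)

theory Defs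
  imports Main
begin

definition oriented_graph :: "'a set \<Rightarrow> ('a \<times> 'a) set \<Rightarrow> bool" where
  "oriented_graph V A \<longleftrightarrow> finite V \<and> A \<subseteq> V \<times> V \<and>
     (\<forall>x. (x, x) \<notin> A) \<and> (\<forall>x y. (x, y) \<in> A \<longrightarrow> (y, x) \<notin> A)"

definition out_nbhd :: "('a \<times> 'a) set \<Rightarrow> 'a \<Rightarrow> 'a set" where
  "out_nbhd A v = {w. (v, w) \<in> A}"

definition second_out_nbhd :: "('a \<times> 'a) set \<Rightarrow> 'a \<Rightarrow> 'a set" where
  "second_out_nbhd A v =
     {w. w \<notin> out_nbhd A v \<and> w \<noteq> v \<and> (\<exists>u \<in> out_nbhd A v. (u, w) \<in> A)}"

definition missing_edges :: "'a set \<Rightarrow> ('a \<times> 'a) set \<Rightarrow> 'a set set" where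
  "missing_edges V A =
     {{x, y} | x y. x \<in> V \<and> y \<in> V \<and> x \<noteq> y \<and> (x, y) \<notin> A \<and> (y, x) \<notin> A}"

text \<open>The missing graph (vertex set V, edge set the missing edges) is a vertex-disjoint
  union of paths: its edge set is the union of the edge sets of a family of pairwise
  vertex-disjoint paths (lists of distinct vertices), so every vertex lies on at most one
  path (vertices on no path are trivial paths).\<close>
definition path_edges :: "'a list \<Rightarrow> 'a set set" where
  "path_edges p = {{p ! i, p ! Suc i} | i. Suc i < length p}"

definition missing_graph_disjoint_paths :: "'a set \<Rightarrow> ('a \<times> 'a) set \<Rightarrow> bool" where
  "missing_graph_disjoint_paths V A \<longleftrightarrow>
     (\<exists>P :: 'a list set.
        (\<forall>p \<in> P. p \<noteq> [] \<and> distinct p \<and> set p \<subseteq> V) \<and>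
        (\<forall>p \<in> P. \<forall>q \<in> P. p \<noteq> q \<longrightarrow> set p \<inter> set q = {}) \<and>
        missing_edges V A = (\<Union>p \<in> P. path_edges p))"

definition loses_to :: "('a \<times> 'a) set \<Rightarrow> 'a set \<Rightarrow> 'a set \<Rightarrow> bool" where
  "loses_to A e e' \<longleftrightarrow>
     (\<exists>x y a b. e = {x, y} \<and> e' = {a, b} \<and>
        (x, a) \<in> A \<and> b \<notin> out_nbhd A x \<union> second_out_nbhd A x \<and>
        (y, b) \<in> A \<and> a \<notin> out_nbhd A y \<union> second_out_nbhd A y)"

definition dependency_arcs :: "'a set \<Rightarrow> ('a \<times> 'a) set \<Rightarrow> ('a set \<times> 'a set) set" where
  "dependency_arcs V A =
     {(e, e'). e \<in> missing_edges V A \<and> e' \<in> missing_edges V A \<and> loses_to A e e'}"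

definition dep_out_degree :: "'a set \<Rightarrow> ('a \<times> 'a) set \<Rightarrow> 'a set \<Rightarrow> nat" where
  "dep_out_degree V A e = card {e'. (e, e') \<in> dependency_arcs V A}"

definition dep_in_degree :: "'a set \<Rightarrow> ('a \<times> 'a) set \<Rightarrow> 'a set \<Rightarrow> nat" where
  "dep_in_degree V A e = card {e'. (e', e) \<in> dependency_arcs V A}"

end

theory Submission
  imports Defs
begin

lemma out_key:
  assumes og: "oriented_graph V A"
    and "(x,y)\<notin>A" "(y,x)\<notin>A" "x\<noteq>y"
    and "(x,a)\<in>A" "a \<notin> out_nbhd A y \<union> second_out_nbhd A y"
    and "(y,b)\<in>A" "b \<notin> out_nbhd A x \<union> second_out_nbhd A x"
  shows "{a,b} \<in> missing_edges V A"
proof -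
  have sub: "A \<subseteq> V \<times> V" using og unfolding oriented_graph_def by blast
  have "a \<in> V" "b \<in> V" using assms(5,7) sub by auto
  moreover have "a \<noteq> b" using assms(6,7) unfolding out_nbhd_def by auto
  moreover have "(a,b) \<notin> A" using assms unfolding out_nbhd_def second_out_nbhd_def by auto
  moreover have "(b,a) \<notin> A" using assms unfolding out_nbhd_def second_out_nbhd_def by auto
  ultimately show ?thesis unfolding missing_edges_def by blast
qed

lemma in_key:
  assumes og: "oriented_graph V A"
    and "(a,b)\<notin>A" "(b,a)\<notin>A" "a\<noteq>b"
    and "(x,a)\<in>A" "b \<notin> out_nbhd A x \<union> second_out_nbhd A x"
    and "(y,b)\<in>A" "a \<notin> out_nbhd A y \<union> second_out_nbhd A y"
  shows "{x,y} \<in> missing_edges V A"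
proof -
  have sub: "A \<subseteq> V \<times> V" using og unfolding oriented_graph_def by blast
  have "x \<in> V" "y \<in> V" using assms(5,7) sub by auto
  moreover have "x \<noteq> y" using assms(6,7) unfolding out_nbhd_def by auto
  moreover have "(x,y) \<notin> A" using assms unfolding out_nbhd_def second_out_nbhd_def by auto
  moreover have "(y,x) \<notin> A" using assms unfolding out_nbhd_def second_out_nbhd_def by auto
  ultimately show ?thesis unfolding missing_edges_def by blast
qed

locale pathsys =
  fixes P :: "'a list set" and M :: "'a set set"
  assumes P1: "\<forall>p \<in> P. p \<noteq> [] \<and> distinct p"
    and P2: "\<forall>p \<in> P. \<forall>q \<in> P. p \<noteq> q \<longrightarrow> set p \<inter> set q = {}"
    and MP: "M = (\<Union>p \<in> P. path_edges p)"
begin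

lemma nbr_pos:
  assumes "{v,w} \<in> M"
  shows "\<exists>p\<in>P. \<exists>i j. i < length p \<and> j < length p \<and> p!i = v \<and> p!j = w \<and> (j = Suc i \<or> i = Suc j)"
proof -
  obtain p k where p: "p \<in> P" "Suc k < length p" "{v,w} = {p!k, p!Suc k}"
    using assms MP unfolding path_edges_def by blast
  show ?thesis
  proof (cases "v = p!k \<and> w = p!Suc k")
    case True then show ?thesis using p by (intro bexI[of _ p] exI[of _ k] exI[of _ "Suc k"]) auto
  next
    case False
    then have "v = p!Suc k \<and> w = p!k" using p(3) by (auto simp: doubleton_eq_iff)
    then show ?thesis using p by (intro bexI[of _ p] exI[of _ "Suc k"] exI[of _ k]) auto
  qed
qed

lemma adj:
  assumes "p \<in> P" "i < length p" "p!i = v" "{v,w} \<in> M"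
  shows "\<exists>j<length p. p!j = w \<and> (j = Suc i \<or> i = Suc j)"
proof -
  obtain q i' j where q: "q\<in>P" "i' < length q" "j < length q" "q!i' = v" "q!j = w" "j = Suc i' \<or> i' = Suc j"
    using nbr_pos[OF assms(4)] by blast
  have "v \<in> set q" "v \<in> set p" using q assms by (auto simp: in_set_conv_nth)
  then have "q = p" using P2 q(1) assms(1) by blast
  then have "i' = i" using P1 assms q nth_eq_iff_index_eq by metis
  then show ?thesis using q \<open>q = p\<close> by blast
qed

lemma degree:
  "finite {w. {v,w} \<in> M} \<and> card {w. {v,w} \<in> M} \<le> 2"
proof (cases "\<exists>w. {v,w} \<in> M")
  case False then show ?thesis by simp
next
  case True
  then obtain w0 where "{v,w0} \<in> M" by blast
  then obtain p i j where p: "p\<in>P" "i < length p" "p!i = v" using nbr_pos by blast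
  have "{w. {v,w} \<in> M} \<subseteq> {p!(i-1), p!Suc i}"
  proof
    fix w assume "w \<in> {w. {v,w} \<in> M}"
    then obtain j where "j<length p" "p!j = w" "j = Suc i \<or> i = Suc j" using adj[OF p] by blast
    then show "w \<in> {p!(i-1), p!Suc i}" by auto
  qed
  moreover have "card {p!(i-1), p!Suc i} \<le> 2" by (simp add: card_insert_if)
  ultimately show ?thesis by (meson card_mono finite.emptyI finite.insertI finite_subset le_trans)
qed

lemma no_c4:
  assumes "s1 \<noteq> s2" "t1 \<noteq> t2" "{s1,t1} \<in> M" "{s1,t2} \<in> M" "{s2,t1} \<in> M" "{s2,t2} \<in> M"
  shows False
proof -
  obtain p i j1 where p: "p\<in>P" "i < length p" "j1 < length p" "p!i = s1" "p!j1 = t1"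
    "j1 = Suc i \<or> i = Suc j1"
    using nbr_pos[OF assms(3)] by blast
  obtain j2 where j2: "j2 < length p" "p!j2 = t2" "j2 = Suc i \<or> i = Suc j2"
    using adj[OF p(1,2,4) assms(4)] by blast
  have "{t1,s2} \<in> M" using assms(5) by (simp add: insert_commute)
  then obtain i2 where i2: "i2 < length p" "p!i2 = s2" "i2 = Suc j1 \<or> j1 = Suc i2"
    using adj[OF p(1,3,5)] by blast
  obtain j2' where j2': "j2' < length p" "p!j2' = t2" "j2' = Suc i2 \<or> i2 = Suc j2'"
    using adj[OF p(1) i2(1,2) assms(6)] by blast
  have dp: "distinct p" using P1 p(1) by blast
  have "j2' = j2" using j2 j2' dp nth_eq_iff_index_eq by metis
  have "j1 \<noteq> j2" using assms(2) p(5) j2(2) by blast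
  then have "i = i2" using p(6) j2(3) i2(3) j2'(3) \<open>j2' = j2\<close> by arith
  then show False using assms(1) p(4) i2(2) by simp
qed

lemma two_elems:
  assumes "finite S" "2 \<le> card S" shows "\<exists>a b. a\<in>S \<and> b\<in>S \<and> a\<noteq>b"
proof (rule ccontr)
  assume n: "\<not> ?thesis"
  have "S \<noteq> {}" using assms by auto
  then obtain a where "a \<in> S" by blast
  then have "S \<subseteq> {a}" using n by blast
  then have "card S \<le> card {a}" by (intro card_mono) auto
  then have "card S \<le> 1" by simp
  then show False using assms by simp
qed

lemma bip:
  assumes "finite S" "finite T" "\<forall>s\<in>S. \<forall>t\<in>T. {s,t} \<in> M"
  shows "card S * card T \<le> 2"
proof (cases "S = {} \<or> T = {}")
  case True then show ?thesis by auto
next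
  case False
  then obtain s t where st: "s \<in> S" "t \<in> T" by blast
  have "T \<subseteq> {w. {s,w} \<in> M}" using assms st by blast
  then have cT: "card T \<le> 2" using degree[of s] card_mono[of "{w. {s,w} \<in> M}" T] by linarith
  have "S \<subseteq> {w. {t,w} \<in> M}" using assms st by (auto simp: insert_commute)
  then have cS: "card S \<le> 2" using degree[of t] card_mono[of "{w. {t,w} \<in> M}" S] by linarith
  have "card S \<le> 1 \<or> card T \<le> 1"
  proof (rule ccontr)
    assume "\<not> ?thesis"
    then have "2 \<le> card S" "2 \<le> card T" by auto
    then obtain s1 s2 t1 t2 where "s1\<in>S" "s2\<in>S" "s1\<noteq>s2" "t1\<in>T" "t2\<in>T" "t1\<noteq>t2"
      using two_elems assms(1,2) by meson
    then show False using no_c4[of s1 s2 t1 t2] assms(3) by simp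
  qed
  then show ?thesis
  proof
    assume "card S \<le> 1" then show ?thesis using cT mult_le_mono[of "card S" 1 "card T" 2] by simp
  next
    assume "card T \<le> 1" then show ?thesis using cS mult_le_mono[of "card S" 2 "card T" 1] by simp
  qed
qed

end

lemma card_pairs:
  assumes "finite S" "finite T" "E \<subseteq> (\<lambda>(a,b). {a,b}) ` (S \<times> T)"
  shows "card E \<le> card S * card T"
proof -
  have "card E \<le> card ((\<lambda>(a,b). {a,b}) ` (S \<times> T))"
    using assms by (intro card_mono) auto
  also have "\<dots> \<le> card (S \<times> T)" using assms by (intro card_image_le) auto
  finally show ?thesis by (simp add: card_cartesian_product)
qed

theorem proposition4p4:
  fixes V :: "'a set" and A :: "('a \<times> 'a) set"
  assumes "oriented_graph V A"
    and "missing_graph_disjoint_paths V A"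
  shows "\<forall>e \<in> missing_edges V A. dep_out_degree V A e \<le> 2 \<and> dep_in_degree V A e \<le> 2"
proof
  fix e assume e: "e \<in> missing_edges V A"
  obtain P where P: "\<forall>p \<in> P. p \<noteq> [] \<and> distinct p \<and> set p \<subseteq> V"
    "\<forall>p \<in> P. \<forall>q \<in> P. p \<noteq> q \<longrightarrow> set p \<inter> set q = {}"
    "missing_edges V A = (\<Union>p \<in> P. path_edges p)"
    using assms(2) unfolding missing_graph_disjoint_paths_def by blast
  interpret pathsys P "missing_edges V A" using P by unfold_locales auto
  have fV: "finite V" and sub: "A \<subseteq> V \<times> V" using assms(1) unfolding oriented_graph_def by auto
  obtain x y where xy: "e = {x,y}" "x \<in> V" "y \<in> V" "x \<noteq> y" "(x,y)\<notin>A" "(y,x)\<notin>A"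
    using e unfolding missing_edges_def by blast
  define NN where "NN = (\<lambda>z. out_nbhd A z \<union> second_out_nbhd A z)"
  define S where "S = {a. (x,a)\<in>A \<and> a \<notin> NN y}"
  define T where "T = {b. (y,b)\<in>A \<and> b \<notin> NN x}"
  have fS: "finite S" using sub fV unfolding S_def by (auto intro: finite_subset[of _ V])
  have fT: "finite T" using sub fV unfolding T_def by (auto intro: finite_subset[of _ V])
  have "\<forall>s\<in>S. \<forall>t\<in>T. {s,t} \<in> missing_edges V A"
    using out_key[OF assms(1) xy(5,6,4)] unfolding S_def T_def NN_def by blast
  then have c1: "card S * card T \<le> 2" using bip fS fT by blast
  have "{e'. (e, e') \<in> dependency_arcs V A} \<subseteq> (\<lambda>(a,b). {a,b}) ` (S \<times> T)"
  proof
    fix e' assume "e' \<in> {e'. (e, e') \<in> dependency_arcs V A}"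
    then obtain x' y' a b where h: "{x,y} = {x',y'}" "e' = {a,b}"
      "(x', a) \<in> A" "b \<notin> NN x'" "(y', b) \<in> A" "a \<notin> NN y'"
      unfolding dependency_arcs_def loses_to_def NN_def xy(1) by blast
    show "e' \<in> (\<lambda>(a,b). {a,b}) ` (S \<times> T)"
    proof (cases "x' = x \<and> y' = y")
      case True then have "(a,b) \<in> S \<times> T" using h unfolding S_def T_def by auto
      then show ?thesis using h(2) by force
    next
      case False then have "x' = y \<and> y' = x" using h(1) by (auto simp: doubleton_eq_iff)
      then have "(b,a) \<in> S \<times> T" using h unfolding S_def T_def by auto
      then show ?thesis using h(2) by (force simp: insert_commute)
    qed
  qed
  then have out: "dep_out_degree V A e \<le> 2" unfolding dep_out_degree_def
    using card_pairs[OF fS fT] c1 le_trans by blast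
  define S' where "S' = {u. (u,x)\<in>A \<and> y \<notin> NN u}"
  define T' where "T' = {u. (u,y)\<in>A \<and> x \<notin> NN u}"
  have fS': "finite S'" using sub fV unfolding S'_def by (auto intro: finite_subset[of _ V])
  have fT': "finite T'" using sub fV unfolding T'_def by (auto intro: finite_subset[of _ V])
  have "\<forall>s\<in>S'. \<forall>t\<in>T'. {s,t} \<in> missing_edges V A"
    using in_key[OF assms(1) xy(5,6,4)] unfolding S'_def T'_def NN_def by blast
  then have c2: "card S' * card T' \<le> 2" using bip fS' fT' by blast
  have "{e'. (e', e) \<in> dependency_arcs V A} \<subseteq> (\<lambda>(a,b). {a,b}) ` (S' \<times> T')"
  proof
    fix e' assume "e' \<in> {e'. (e', e) \<in> dependency_arcs V A}"
    then obtain x' y' a b where h: "e' = {x',y'}" "{x,y} = {a,b}"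
      "(x', a) \<in> A" "b \<notin> NN x'" "(y', b) \<in> A" "a \<notin> NN y'"
      unfolding dependency_arcs_def loses_to_def NN_def xy(1) by blast
    show "e' \<in> (\<lambda>(a,b). {a,b}) ` (S' \<times> T')"
    proof (cases "a = x \<and> b = y")
      case True then have "(x',y') \<in> S' \<times> T'" using h unfolding S'_def T'_def by auto
      then show ?thesis using h(1) by force
    next
      case False then have "a = y \<and> b = x" using h(2) by (auto simp: doubleton_eq_iff)
      then have "(y',x') \<in> S' \<times> T'" using h unfolding S'_def T'_def by auto
      then show ?thesis using h(1) by (force simp: insert_commute)
    qed
  qed
  then have inn: "dep_in_degree V A e \<le> 2" unfolding dep_in_degree_def
    using card_pairs[OF fS' fT'] c2 le_trans by blast
  show "dep_out_degree V A e \<le> 2 \<and> dep_in_degree V A e \<le> 2" using out inn by blast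
qed

end
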